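(* In the approximating model (see context) with exponential arrival clocks of rate $\lambda>0$, heavy-traffic condition $\lambda\mathbb E[S]=1$ and $\mathbb E[S^2]<\infty$, for every $T>0$, $$n^{-1/3}\max_{k\le Tn^{2/3}}A_n(k)\xrightarrow{\ \mathbb P\ }0\qquad(n\to\infty).$$
   Context: Approximating model: fix $n$ and $\beta\in\mathbb R$. Let $T_1,\dots,T_n$ be i.i.d. nonnegative arrival clocks, and let $S_1,S_2,\dots$ be i.i.d. nonnegative service requirements (generic copy $S$), independent of the clocks. Put $D_j:=\frac{S_j}{n}(1+\beta n^{-1/3})$, $\Sigma_0:=0$, $\Sigma_k:=\sum_{j=1}^k D_j$. All $n$ customers start in the population. Set $Q_n(0)=0$ and for $k\ge1$, $Q_n(k)=(Q_n(k-1)+A_n(k)-1)^+$ with $A_n(k)=\sum_{i\notin\nu_k}\mathbf 1\{\Sigma_{k-1}\le T_i\le\Sigma_k\}$, where $\nu_k$ is the set of customers no longer in the population at the beginning of the $k$-th service: a customer leaves the population when its clock rings during a service, and whenever the queue is empty after a service completion, the customer of the population with the smallest clock is removed from the population and immediately put into service. *)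

theory Defs
  imports "HOL-Probability.Probability"
begin

definition svc_D :: "real \<Rightarrow> nat \<Rightarrow> (nat \<Rightarrow> real) \<Rightarrow> nat \<Rightarrow> real" where
  "svc_D \<beta> n s j = s j / real n * (1 + \<beta> * real n powr (-1/3))"

definition Sig :: "real \<Rightarrow> nat \<Rightarrow> (nat \<Rightarrow> real) \<Rightarrow> nat \<Rightarrow> real" where
  "Sig \<beta> n s k = (\<Sum>j\<in>{1..k}. svc_D \<beta> n s j)"

definition pick_min :: "(nat \<Rightarrow> real) \<Rightarrow> nat set \<Rightarrow> nat set" where
  "pick_min t P = (if P = {} then {}
     else {LEAST i. i \<in> P \<and> (\<forall>j\<in>P. t i \<le> t j)})"

(* customers 0..<n of the population (not in nu) whose clock rings during the
   (k+1)-th service, i.e. in [Sigma_k, Sigma_(k+1)] *)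
definition arrivals ::
  "real \<Rightarrow> nat \<Rightarrow> (nat \<Rightarrow> real) \<Rightarrow> (nat \<Rightarrow> real) \<Rightarrow> nat set \<Rightarrow> nat \<Rightarrow> nat set" where
  "arrivals \<beta> n t s \<nu> k =
     {i \<in> {..<n} - \<nu>. Sig \<beta> n s k \<le> t i \<and> t i \<le> Sig \<beta> n s (Suc k)}"

(* qstate k = (nu_(k+1), Q_n(k)) : the set of customers no longer in the
   population at the beginning of the (k+1)-th service, and the queue length
   after the k-th service. *)
fun qstate :: "real \<Rightarrow> nat \<Rightarrow> (nat \<Rightarrow> real) \<Rightarrow> (nat \<Rightarrow> real) \<Rightarrow> nat \<Rightarrow> nat set \<times> nat" where
  "qstate \<beta> n t s 0 = (pick_min t {..<n}, 0)"
| "qstate \<beta> n t s (Suc k) =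
     (let \<nu> = fst (qstate \<beta> n t s k); q = snd (qstate \<beta> n t s k);
          arr = arrivals \<beta> n t s \<nu> k;
          q' = (q + card arr) - 1;
          \<nu>' = \<nu> \<union> arr
      in (if q' = 0 then \<nu>' \<union> pick_min t ({..<n} - \<nu>') else \<nu>', q'))"

definition A_n :: "real \<Rightarrow> nat \<Rightarrow> (nat \<Rightarrow> real) \<Rightarrow> (nat \<Rightarrow> real) \<Rightarrow> nat \<Rightarrow> nat" where
  "A_n \<beta> n t s k = card (arrivals \<beta> n t s (fst (qstate \<beta> n t s (k - 1))) (k - 1))"

definition Q_n :: "real \<Rightarrow> nat \<Rightarrow> (nat \<Rightarrow> real) \<Rightarrow> (nat \<Rightarrow> real) \<Rightarrow> nat \<Rightarrow> nat" where
  "Q_n \<beta> n t s k = snd (qstate \<beta> n t s k)"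

definition maxA :: "real \<Rightarrow> real \<Rightarrow> nat \<Rightarrow> (nat \<Rightarrow> real) \<Rightarrow> (nat \<Rightarrow> real) \<Rightarrow> nat" where
  "maxA \<beta> Tm n t s =
     Max (insert 0 (A_n \<beta> n t s ` {k. 1 \<le> k \<and> real k \<le> Tm * real n powr (2/3)}))"

definition conv_prob_zero :: "'a measure \<Rightarrow> (nat \<Rightarrow> 'a \<Rightarrow> real) \<Rightarrow> bool" where
  "conv_prob_zero M X \<longleftrightarrow>
     (\<forall>\<epsilon>>0. ((\<lambda>n. measure M {\<omega> \<in> space M. \<bar>X n \<omega>\<bar> > \<epsilon>}) \<longlongrightarrow> 0) sequentially)"

end

theory Submission
  imports Defs "HOL-Real_Asymp.Real_Asymp"
begin



lemma exp_ge_one: "1 \<le> exp (1::real)" by simp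

lemma exp_minus_one_le: "0 \<le> (x::real) \<Longrightarrow> exp x - 1 \<le> x * exp x"
proof -
  assume "0 \<le> x"
  have "1 - x \<le> exp (- x)" using exp_ge_add_one_self[of "-x"] by simp
  hence "(1 - x) * exp x \<le> exp (-x) * exp x" by (intro mult_right_mono) auto
  thus ?thesis by (simp add: exp_minus field_simps)
qed

lemma (in prob_space) chernoff_window:
  fixes X :: "'i \<Rightarrow> 'a \<Rightarrow> real"
  assumes fin: "finite I" and ind: "indep_vars (\<lambda>_. borel) X I" and W: "W \<in> sets borel"
    and pq: "\<And>i. i\<in>I \<Longrightarrow> prob {\<omega>\<in>space M. X i \<omega> \<in> W} \<le> q" and q: "0 \<le> q" and a: "0 < a"
  shows "prob {\<omega>\<in>space M. a < (\<Sum>i\<in>I. indicator W (X i \<omega>))}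
     \<le> (card I * (exp 1 - 1) * q) * exp (card I * (exp 1 - 1) * q) / (exp a - 1)"
proof -
  have meas[measurable]: "\<And>i. i\<in>I \<Longrightarrow> X i \<in> borel_measurable M"
    using ind by (auto simp: indep_vars_def)
  define Z where "Z i \<omega> = exp (indicator W (X i \<omega>) :: real)" for i \<omega>
  have mZ: "(\<lambda>x. exp (indicator W x :: real)) \<in> borel_measurable borel"
    using W by measurable
  have indZ: "indep_vars (\<lambda>_. borel) Z I"
    unfolding Z_def using indep_vars_compose2[OF ind, of "\<lambda>i x. exp (indicator W x :: real)" "\<lambda>_. borel"] mZ
    by simp
  have mZi[measurable]: "i\<in>I \<Longrightarrow> Z i \<in> borel_measurable M" for i
    unfolding Z_def using W by measurable
  have intZ: "i\<in>I \<Longrightarrow> integrable M (Z i)" for i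
    by (rule integrable_const_bound[where B="exp 1"]) (auto simp: Z_def indicator_def)
  have EZ: "expectation (Z i) \<le> 1 + (exp 1 - 1) * q" if i: "i\<in>I" for i
  proof -
    have A: "{\<omega>\<in>space M. X i \<omega> \<in> W} \<in> sets M" using W i by measurable
    have "expectation (Z i) = expectation (\<lambda>\<omega>. 1 + (exp 1 - 1) * indicator {\<omega>\<in>space M. X i \<omega> \<in> W} \<omega>)"
      by (intro Bochner_Integration.integral_cong) (auto simp: Z_def indicator_def)
    also have "\<dots> = 1 + (exp 1 - 1) * prob {\<omega>\<in>space M. X i \<omega> \<in> W}"
      using A by (subst Bochner_Integration.integral_add) (auto simp: prob_space Int_absorb2 sets.sets_into_space intro!: integrable_real_indicator emeasure_finite[THEN less_top[THEN iffD1]])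
    also have "\<dots> \<le> 1 + (exp 1 - 1) * q"
      using pq[OF i] by (intro add_left_mono mult_left_mono) (auto simp: exp_ge_one)
    finally show ?thesis .
  qed
  define x where "x = card I * (exp 1 - 1) * q"
  have x0: "0 \<le> x" using q by (simp add: x_def exp_ge_one)
  have "expectation (\<lambda>\<omega>. \<Prod>i\<in>I. Z i \<omega>) = (\<Prod>i\<in>I. expectation (Z i))"
    by (rule indep_vars_lebesgue_integral[OF fin indZ intZ])
  also have "\<dots> \<le> (\<Prod>i\<in>I. 1 + (exp 1 - 1) * q)"
  proof (rule prod_mono)
    fix i assume i: "i\<in>I"
    have "0 \<le> expectation (Z i)" by (rule integral_nonneg_AE) (auto simp: Z_def)
    thus "0 \<le> expectation (Z i) \<and> expectation (Z i) \<le> 1 + (exp 1 - 1) * q" using EZ[OF i] by simp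
  qed
  also have "\<dots> = (1 + (exp 1 - 1) * q) ^ card I" by simp
  also have "\<dots> \<le> exp ((exp 1 - 1) * q) ^ card I"
    using q exp_ge_add_one_self[of "(exp 1 - 1) * q"] by (intro power_mono) (auto simp: add.commute)
  also have "\<dots> = exp x" by (simp add: x_def exp_of_nat_mult[symmetric] mult.assoc)
  finally have EP: "expectation (\<lambda>\<omega>. \<Prod>i\<in>I. Z i \<omega>) \<le> exp x" .
  have intP: "integrable M (\<lambda>\<omega>. \<Prod>i\<in>I. Z i \<omega>)"
    by (rule indep_vars_integrable[OF fin indZ intZ])
  define u where "u \<omega> = (\<Prod>i\<in>I. Z i \<omega>) - 1" for \<omega>
  have Zexp: "(\<Prod>i\<in>I. Z i \<omega>) = exp (\<Sum>i\<in>I. indicator W (X i \<omega>))" for \<omega>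
    using fin by (simp add: exp_sum Z_def)
  have intu: "integrable M u" unfolding u_def using intP by simp
  have u0: "AE \<omega> in M. 0 \<le> u \<omega>"
    by (auto simp: u_def Zexp intro!: sum_nonneg)
  have ea: "0 < exp a - 1" using a by simp
  have "prob {\<omega>\<in>space M. a < (\<Sum>i\<in>I. indicator W (X i \<omega>))} \<le> prob {\<omega>\<in>space M. exp a - 1 \<le> u \<omega>}"
  proof (rule finite_measure_mono)
    show "{\<omega> \<in> space M. exp a - 1 \<le> u \<omega>} \<in> events" unfolding u_def by measurable
    show "{\<omega> \<in> space M. a < (\<Sum>i\<in>I. indicator W (X i \<omega>))} \<subseteq> {\<omega> \<in> space M. exp a - 1 \<le> u \<omega>}"
      by (auto simp: u_def Zexp less_imp_le)
  qed
  also have "\<dots> \<le> expectation u / (exp a - 1)"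
    by (rule integral_Markov_inequality_measure[OF intu sets.top u0 ea])
  also have "expectation u = expectation (\<lambda>\<omega>. \<Prod>i\<in>I. Z i \<omega>) - 1"
    unfolding u_def using intP by (simp add: prob_space)
  also have "\<dots> \<le> x * exp x" using EP exp_minus_one_le[OF x0] by simp
  finally show ?thesis using ea by (simp add: x_def divide_right_mono)
qed



definition expF :: "real \<Rightarrow> real \<Rightarrow> real" where
  "expF l x = 1 - exp (- l * max x 0)"

lemma expF_nonneg: "0 < l \<Longrightarrow> 0 \<le> expF l x"
  by (simp add: expF_def)

lemma expF_le1: "expF l x \<le> 1"
  by (simp add: expF_def)

lemma expF_lip: assumes "0 < l" "w \<le> v" shows "expF l v - expF l w \<le> l * (v - w)"
proof -
  define u where "u = l * max w 0"
  define z where "z = l * max v 0"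
  have uz: "u \<le> z" "0 \<le> u" using assms by (auto simp: u_def z_def intro!: mult_left_mono)
  have "exp (-u) - exp (-z) = exp (-u) * (1 - exp (-(z - u)))"
    by (simp add: algebra_simps exp_diff exp_minus field_simps)
  also have "\<dots> \<le> 1 * (z - u)"
  proof (rule mult_mono)
    show "exp (-u) \<le> 1" using uz by simp
    show "1 - exp (-(z-u)) \<le> z - u" using exp_ge_add_one_self[of "u - z"] by (simp add: algebra_simps)
  qed (use uz in auto)
  also have "z - u \<le> l * (v - w)"
  proof -
    have "max v 0 - max w 0 \<le> v - w" using assms by auto
    hence "l * (max v 0 - max w 0) \<le> l * (v - w)" using assms by (intro mult_left_mono) auto
    thus ?thesis by (simp add: z_def u_def algebra_simps)
  qed
  finally show ?thesis by (simp add: expF_def u_def z_def)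
qed

lemma (in prob_space) exp_prob_le:
  assumes D: "distributed M lborel X (exponential_density l)" and l: "0 < l"
  shows "prob {\<omega>\<in>space M. X \<omega> \<le> x} = expF l x"
proof (cases "0 \<le> x")
  case True
  thus ?thesis using exponential_distributedD_le[OF D True l] by (simp add: expF_def mult.commute)
next
  case False
  have m[measurable]: "X \<in> borel_measurable M"
    using distributed_measurable[OF D] by simp
  have "prob {\<omega>\<in>space M. X \<omega> \<le> x} \<le> prob {\<omega>\<in>space M. X \<omega> \<le> 0}"
    using False by (intro finite_measure_mono) auto
  also have "\<dots> = 0" using exponential_distributedD_le[OF D _ l, of 0] by simp
  finally show ?thesis using False by (simp add: expF_def measure_nonneg order_antisym)
qed

lemma (in prob_space) exp_prob_interval:
  assumes D: "distributed M lborel X (exponential_density l)" and l: "0 < l" and w: "w < u" and wv: "w \<le> v"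
  shows "prob {\<omega>\<in>space M. X \<omega> \<in> {u..v}} \<le> expF l v - expF l w"
proof -
  have m[measurable]: "X \<in> borel_measurable M"
    using distributed_measurable[OF D] by simp
  have "prob {\<omega>\<in>space M. X \<omega> \<in> {u..v}} \<le> prob ({\<omega>\<in>space M. X \<omega> \<le> v} - {\<omega>\<in>space M. X \<omega> \<le> w})"
    using w by (intro finite_measure_mono) auto
  also have "\<dots> = prob {\<omega>\<in>space M. X \<omega> \<le> v} - prob {\<omega>\<in>space M. X \<omega> \<le> w}"
    using wv by (intro finite_measure_Diff) auto
  finally show ?thesis using exp_prob_le[OF D l] by simp
qed

definition qw :: "real \<Rightarrow> real \<Rightarrow> nat \<Rightarrow> real" where
  "qw l h j = expF l ((real j + 2) * h) - expF l ((real j - 1) * h)"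

lemma qw_nonneg: "0 < l \<Longrightarrow> 0 < h \<Longrightarrow> 0 \<le> qw l h j"
  unfolding qw_def expF_def by (auto intro!: mult_right_mono)

lemma qw_le: "0 < l \<Longrightarrow> 0 < h \<Longrightarrow> qw l h j \<le> 3 * l * h"
  unfolding qw_def using expF_lip[of l "(real j - 1) * h" "(real j + 2) * h"]
  by (simp add: algebra_simps)

lemma qw_sum: assumes "0 < l" "0 < h" shows "(\<Sum>j<J. qw l h j) \<le> 3"
proof -
  define f where "f i = expF l ((real i - 1) * h)" for i :: nat
  have q: "qw l h j = (f (Suc (j+2)) - f (j+2)) + (f (Suc (j+1)) - f (j+1)) + (f (Suc j) - f j)" for j
    by (simp add: qw_def f_def algebra_simps)
  have "(\<Sum>j<J. qw l h j) = (\<Sum>j<J. (\<lambda>i. f (i+2)) (Suc j) - (\<lambda>i. f (i+2)) j) + (\<Sum>j<J. (\<lambda>i. f (i+1)) (Suc j) - (\<lambda>i. f (i+1)) j) + (\<Sum>j<J. f (Suc j) - f j)"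
    unfolding q sum.distrib by simp
  also have "\<dots> = (f (J+2) - f 2) + (f (J+1) - f 1) + (f J - f 0)"
    using sum_lessThan_telescope[of "\<lambda>i. f (i+2)" J] sum_lessThan_telescope[of "\<lambda>i. f (i+1)" J] sum_lessThan_telescope[of f J] by (simp add: numeral_2_eq_2)
  also have "\<dots> \<le> 3"
    using expF_nonneg[OF assms(1)] expF_le1 unfolding f_def
    by (smt (verit))
  finally show ?thesis .
qed

lemma (in prob_space) E3_bound:
  fixes X :: "'i \<Rightarrow> 'a \<Rightarrow> real"
  assumes l: "0 < l" and h: "0 < h" and a: "0 < a" and fin: "finite I"
    and ind: "indep_vars (\<lambda>_. borel) X I"
    and D: "\<And>i. i \<in> I \<Longrightarrow> distributed M lborel (X i) (exponential_density l)"
    and small: "card I * (exp 1 - 1) * (3 * l * h) \<le> a / 2"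
  shows "prob (\<Union>j::nat. {\<omega>\<in>space M. a < (\<Sum>i\<in>I. indicator {real j * h..(real j + 2) * h} (X i \<omega>))})
     \<le> 3 * (card I * (exp 1 - 1) * exp (a/2) / (exp a - 1))"
proof -
  have meas[measurable]: "\<And>i. i\<in>I \<Longrightarrow> X i \<in> borel_measurable M"
    using ind by (auto simp: indep_vars_def)
  define A where "A j = {\<omega>\<in>space M. a < (\<Sum>i\<in>I. indicator {real j * h..(real j + 2) * h} (X i \<omega>))}" for j :: nat
  define K where "K = card I * (exp 1 - 1) * exp (a/2) / (exp a - 1)"
  have ea: "0 < exp a - 1" using a by simp
  have K0: "0 \<le> K" using ea by (simp add: K_def)
  have At: "prob (A j) \<le> K * qw l h j" for j
  proof -
    define x where "x = card I * (exp 1 - 1) * qw l h j"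
    have x0: "0 \<le> x" using qw_nonneg[OF l h] by (simp add: x_def)
    have xa: "x \<le> a/2"
      using small qw_le[OF l h, of j] by (smt (verit) exp_ge_one mult_left_mono of_nat_0_le_iff x_def mult_nonneg_nonneg)
    have "prob (A j) \<le> x * exp x / (exp a - 1)"
      unfolding A_def x_def
    proof (rule chernoff_window[OF fin ind])
      show "{real j * h..(real j + 2) * h} \<in> sets borel" by simp
      show "0 \<le> qw l h j" by (rule qw_nonneg[OF l h])
      fix i assume "i \<in> I"
      show "prob {\<omega> \<in> space M. X i \<omega> \<in> {real j * h..(real j + 2) * h}} \<le> qw l h j"
        unfolding qw_def using h by (intro exp_prob_interval[OF D[OF \<open>i\<in>I\<close>] l]) (simp_all add: mult_right_mono)
    qed (use a in auto)
    also have "\<dots> \<le> x * exp (a/2) / (exp a - 1)"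
      using ea x0 xa by (intro divide_right_mono mult_left_mono) auto
    also have "\<dots> = K * qw l h j" by (simp add: K_def x_def)
    finally show ?thesis .
  qed
  have sq: "summable (qw l h)"
    by (rule summableI_nonneg_bounded[where x=3]) (auto intro: qw_nonneg[OF l h] qw_sum[OF l h])
  have sKq: "summable (\<lambda>j. K * qw l h j)" using sq by (rule summable_mult)
  have sA: "summable (\<lambda>j. prob (A j))"
    by (rule summable_comparison_test'[OF sKq]) (use At in auto)
  have "prob (\<Union>j. A j) \<le> (\<Sum>j. prob (A j))"
    by (rule finite_measure_subadditive_countably[OF _ sA]) (auto simp: A_def)
  also have "\<dots> \<le> (\<Sum>j. K * qw l h j)" by (rule suminf_le[OF At sA sKq])
  also have "\<dots> = K * (\<Sum>j. qw l h j)" using sq by (rule suminf_mult)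
  also have "\<dots> \<le> K * 3"
    by (intro mult_left_mono K0 suminf_le_const[OF sq] qw_sum[OF l h])
  finally show ?thesis by (simp add: A_def K_def mult.commute)
qed



lemma window_cover:
  assumes h: "0 < h" and t: "0 \<le> t" and xt: "x \<le> t" and td: "t \<le> x + d" and d: "d \<le> h"
  shows "t \<in> {real (nat \<lfloor>x / h\<rfloor>) * h..(real (nat \<lfloor>x / h\<rfloor>) + 2) * h}"
proof (cases "x < 0")
  case True
  hence "nat \<lfloor>x / h\<rfloor> = 0" using h by (simp add: divide_neg_pos)
  thus ?thesis using t td d True by auto
next
  case False
  hence j: "real (nat \<lfloor>x / h\<rfloor>) = of_int \<lfloor>x / h\<rfloor>" using h by simp
  have "of_int \<lfloor>x / h\<rfloor> * h \<le> x"
    using h by (metis floor_divide_lower)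
  moreover have "x < (of_int \<lfloor>x / h\<rfloor> + 1) * h"
    using h by (metis floor_divide_upper)
  ultimately show ?thesis using j xt td d by (auto simp: algebra_simps)
qed

lemma Sig_Suc: "Sig \<beta> n s (Suc k) = Sig \<beta> n s k + svc_D \<beta> n s (Suc k)"
  by (simp add: Sig_def)

lemma maxA_event:
  fixes t s :: "nat \<Rightarrow> real"
  assumes h: "0 < h" and a: "0 \<le> a" and tnn: "\<forall>i<n. 0 \<le> t i"
    and Dk: "\<forall>k. 1 \<le> k \<and> real k \<le> Tm * real n powr (2/3) \<longrightarrow> svc_D \<beta> n s k \<le> h"
    and big: "a < real (maxA \<beta> Tm n t s)"
  shows "\<exists>j::nat. a < (\<Sum>i<n. indicator {real j * h..(real j + 2) * h} (t i))"
proof -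
  define K where "K = {k::nat. 1 \<le> k \<and> real k \<le> Tm * real n powr (2/3)}"
  have "K \<subseteq> {..nat \<lceil>Tm * real n powr (2/3)\<rceil>}"
    unfolding K_def by (auto simp: le_nat_iff le_ceiling_iff)
  hence finK: "finite K" by (rule finite_subset) simp
  have mx: "maxA \<beta> Tm n t s = Max (insert 0 (A_n \<beta> n t s ` K))"
    by (simp add: maxA_def K_def)
  have "maxA \<beta> Tm n t s \<in> insert 0 (A_n \<beta> n t s ` K)"
    unfolding mx using finK by (intro Max_in) auto
  moreover have "maxA \<beta> Tm n t s \<noteq> 0" using big a by auto
  ultimately obtain k where k: "k \<in> K" and mk: "maxA \<beta> Tm n t s = A_n \<beta> n t s k" by auto
  have k1: "1 \<le> k" and kD: "svc_D \<beta> n s k \<le> h" using k Dk by (auto simp: K_def)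
  define x where "x = Sig \<beta> n s (k - 1)"
  define j where "j = nat \<lfloor>x / h\<rfloor>"
  define W where "W = {real j * h..(real j + 2) * h}"
  have SigK: "Sig \<beta> n s (Suc (k - 1)) = x + svc_D \<beta> n s k"
    using k1 Sig_Suc[of \<beta> n s "k - 1"] by (simp add: x_def)
  have "A_n \<beta> n t s k \<le> card {i\<in>{..<n}. t i \<in> W}"
    unfolding A_n_def
  proof (rule card_mono)
    show "finite {i \<in> {..<n}. t i \<in> W}" by simp
    show "arrivals \<beta> n t s (fst (qstate \<beta> n t s (k - 1))) (k - 1) \<subseteq> {i \<in> {..<n}. t i \<in> W}"
    proof
      fix i assume "i \<in> arrivals \<beta> n t s (fst (qstate \<beta> n t s (k - 1))) (k - 1)"
      hence i: "i < n" "x \<le> t i" "t i \<le> x + svc_D \<beta> n s k"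
        unfolding arrivals_def SigK by (auto simp: x_def)
      show "i \<in> {i \<in> {..<n}. t i \<in> W}"
        using window_cover[OF h _ i(2) i(3) kD] tnn i(1) by (auto simp: W_def j_def)
    qed
  qed
  hence "real (A_n \<beta> n t s k) \<le> real (card {i\<in>{..<n}. t i \<in> W})" by simp
  also have "real (card {i\<in>{..<n}. t i \<in> W}) = (\<Sum>i<n. indicator W (t i))"
  proof -
    have "(\<Sum>i<n. indicator W (t i) :: real) = (\<Sum>i<n. indicator {i. t i \<in> W} i)"
      by (simp add: indicator_def)
    also have "\<dots> = card ({..<n} \<inter> {i. t i \<in> W})" by (simp add: indicator_def sum.If_cases)
    finally show ?thesis by (simp add: Int_def)
  qed
  finally have "real (maxA \<beta> Tm n t s) \<le> (\<Sum>i<n. indicator W (t i))" unfolding mk .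
  thus ?thesis using big unfolding W_def by (intro exI[of _ j]) linarith
qed



lemma tail_prob:
  fixes X :: "'a \<Rightarrow> real"
  assumes P: "prob_space M" and X[measurable]: "X \<in> borel_measurable M"
    and Sd: "distr M borel X = Sd" and int: "integrable Sd (\<lambda>x. x^2)" and c: "0 < c"
  shows "measure M {\<omega>\<in>space M. c < X \<omega>} \<le> (\<integral>x. x^2 * indicator {c<..} x \<partial>Sd) / c^2"
proof -
  interpret Sd: prob_space Sd unfolding Sd[symmetric] by (rule prob_space.prob_space_distr[OF P X])
  have sSd: "sets Sd = sets borel" unfolding Sd[symmetric] by simp
  have spSd: "space Sd = UNIV" unfolding Sd[symmetric] by simp
  have "measure M {\<omega>\<in>space M. c < X \<omega>} = measure Sd {c<..}"
    unfolding Sd[symmetric] by (subst measure_distr) (auto simp: vimage_def Int_def conj_commute)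
  also have "\<dots> \<le> measure Sd {x\<in>space Sd. c^2 \<le> x^2 * indicator {c<..} x}"
  proof (rule Sd.finite_measure_mono)
    show "{c<..} \<subseteq> {x \<in> space Sd. c\<^sup>2 \<le> x\<^sup>2 * indicator {c<..} x}"
      using c by (auto simp: spSd intro!: power_mono)
    show "{x \<in> space Sd. c\<^sup>2 \<le> x\<^sup>2 * indicator {c<..} x} \<in> sets Sd"
      unfolding sSd spSd by measurable
  qed
  also have "\<dots> \<le> (\<integral>x. x^2 * indicator {c<..} x \<partial>Sd) / c^2"
  proof (rule integral_Markov_inequality_measure[OF _ sets.top[of Sd]])
    show "integrable Sd (\<lambda>x. x\<^sup>2 * indicator {c<..} x)"
      by (rule integrable_real_mult_indicator[OF _ int]) (simp add: sSd)
  qed (use c in auto)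
  finally show ?thesis .
qed

lemma tail_int_tendsto:
  fixes Sd :: "real measure" and cs :: "nat \<Rightarrow> real"
  assumes sSd: "sets Sd = sets borel" and int: "integrable Sd (\<lambda>x. x^2)"
    and cs: "filterlim cs at_top sequentially"
  shows "(\<lambda>n. \<integral>x. x^2 * indicator {cs n<..} x \<partial>Sd) \<longlonglongrightarrow> 0"
proof -
  have "(\<lambda>n. \<integral>x. x^2 * indicator {cs n<..} x \<partial>Sd) \<longlonglongrightarrow> (\<integral>x. 0 \<partial>Sd)"
  proof (rule integral_dominated_convergence[where w="\<lambda>x. x^2" and f="\<lambda>x. 0" and s="\<lambda>n x. x^2 * indicator {cs n<..} x"])
    show "(\<lambda>x. 0::real) \<in> borel_measurable Sd" by simp
    show "(\<lambda>x. x\<^sup>2 * indicator {cs i<..} x) \<in> borel_measurable Sd" for i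
      unfolding measurable_cong_sets[OF sSd refl] by measurable
    show "integrable Sd (\<lambda>x. x^2)" by (rule int)
    show "AE x in Sd. (\<lambda>i. x\<^sup>2 * indicator {cs i<..} x) \<longlonglongrightarrow> 0"
    proof (rule AE_I2, rule tendsto_eventually)
      fix x
      have "eventually (\<lambda>i. x \<le> cs i) sequentially"
        using cs by (simp add: filterlim_at_top)
      thus "eventually (\<lambda>i. x\<^sup>2 * indicator {cs i<..} x = 0) sequentially"
        by eventually_elim auto
    qed
    show "AE x in Sd. norm (x\<^sup>2 * indicator {cs i<..} x) \<le> x^2" for i
      by (auto simp: indicator_def)
  qed
  thus ?thesis by simp
qed




lemma card_Kset:
  assumes "0 \<le> y"
  shows "real (card {k::nat. 1 \<le> k \<and> real k \<le> y}) \<le> y"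
proof -
  have "{k::nat. 1 \<le> k \<and> real k \<le> y} = {1..nat \<lfloor>y\<rfloor>}"
    using assms by (auto simp: le_nat_iff le_floor_iff)
  hence "card {k::nat. 1 \<le> k \<and> real k \<le> y} = nat \<lfloor>y\<rfloor>" by simp
  moreover have "real (nat \<lfloor>y\<rfloor>) \<le> y" using assms by simp
  ultimately show ?thesis by simp
qed

theorem mainTheorem4:
  fixes M :: "'a measure" and T :: "nat \<Rightarrow> nat \<Rightarrow> 'a \<Rightarrow> real"
    and S :: "nat \<Rightarrow> nat \<Rightarrow> 'a \<Rightarrow> real" and Sd :: "real measure"
    and lam \<beta> Tm :: real
  assumes "prob_space M"
    and "lam > 0"
    and clocks: "\<And>n i. i < n \<Longrightarrow> distributed M lborel (T n i) (exponential_density lam)"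
    and services: "\<And>n j. 1 \<le> j \<Longrightarrow> distr M borel (S n j) = Sd"
    and Sd_nonneg: "AE x in Sd. 0 \<le> x"
    and Sd_sq: "integrable Sd (\<lambda>x. x ^ 2)"
    and heavy: "lam * (\<integral>x. x \<partial>Sd) = 1"
    and indep: "\<And>n. prob_space.indep_vars M (\<lambda>_. borel)
        (\<lambda>x. case x of Inl i \<Rightarrow> T n i | Inr j \<Rightarrow> S n j)
        (Inl ` {..<n} \<union> Inr ` {1..})"
    and "Tm > 0"
  shows "conv_prob_zero M
     (\<lambda>n \<omega>. real n powr (-1/3) * real (maxA \<beta> Tm n (\<lambda>i. T n i \<omega>) (\<lambda>j. S n j \<omega>)))"
proof -
  interpret prob_space M by fact
  have lam: "0 < lam" by fact
  have Tm: "0 < Tm" by fact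
  define Xc where "Xc n = (\<lambda>x. case x of Inl i \<Rightarrow> T n i | Inr j \<Rightarrow> S n j)" for n
  have mX: "x \<in> Inl ` {..<n} \<union> Inr ` {1..} \<Longrightarrow> Xc n x \<in> borel_measurable M" for n x
    using indep[of n] unfolding Xc_def[symmetric] by (auto simp: indep_vars_def)
  have mT: "i < n \<Longrightarrow> T n i \<in> borel_measurable M" for n i
    using mX[of "Inl i" n] by (simp add: Xc_def)
  have mS: "1 \<le> j \<Longrightarrow> S n j \<in> borel_measurable M" for n j
    using mX[of "Inr j" n] by (simp add: Xc_def)
  have sSd: "sets Sd = sets borel"
  proof -
    have "distr M borel (S 0 1) = Sd" by (rule services) simp
    thus ?thesis by (metis sets_distr)
  qed
  define K :: real where "K = 6 * (exp 1 - 1)"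
  have K0: "0 < K" by (simp add: K_def)
  show ?thesis unfolding conv_prob_zero_def
  proof (intro allI impI)
    fix \<epsilon> :: real assume \<epsilon>: "0 < \<epsilon>"
    define cn where "cn n = 1 + \<beta> * real n powr (-1/3)" for n :: nat
    define a where "a n = \<epsilon> * real n powr (1/3)" for n :: nat
    define h where "h n = a n / (K * lam * real n)" for n :: nat
    define c where "c n = h n * real n / cn n" for n :: nat
    define g where "g n = (\<integral>x. x^2 * indicator {c n<..} x \<partial>Sd)" for n
    define b1 where "b1 n = Tm * (real n powr (2/3) / (c n)^2) * g n" for n
    define b3 where "b3 n = 3 * (real n * (exp 1 - 1) * exp (a n / 2) / (exp (a n) - 1))" for n
    define P where "P n = prob {\<omega> \<in> space M. \<epsilon> < \<bar>real n powr (-1/3) * real (maxA \<beta> Tm n (\<lambda>i. T n i \<omega>) (\<lambda>j. S n j \<omega>))\<bar>}" for n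
    have cn1: "cn \<longlonglongrightarrow> 1" unfolding cn_def by real_asymp
    have "eventually (\<lambda>n. 0 < cn n) sequentially"
      using cn1 by (rule order_tendstoD) simp
    moreover have "eventually (\<lambda>n. 1 \<le> n) sequentially" by (simp add: eventually_ge_at_top)
    ultimately have ev: "eventually (\<lambda>n. P n \<le> b1 n + b3 n) sequentially"
    proof eventually_elim
      case (elim n)
      have n0: "0 < real n" using elim by simp
      have a0: "0 < a n" using n0 \<epsilon> by (simp add: a_def)
      have h0: "0 < h n" using a0 n0 K0 lam by (simp add: h_def)
      have c0: "0 < c n" using h0 n0 elim by (simp add: c_def)
      define Ks where "Ks = {k::nat. 1 \<le> k \<and> real k \<le> Tm * real n powr (2/3)}"
      define W where "W j = {real j * h n..(real j + 2) * h n}" for j :: nat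
      define E1 where "E1 = (\<Union>k\<in>Ks. {\<omega>\<in>space M. c n < S n k \<omega>})"
      define E2 where "E2 = (\<Union>i\<in>{..<n}. {\<omega>\<in>space M. T n i \<omega> < 0})"
      define E3 where "E3 = (\<Union>j::nat. {\<omega>\<in>space M. a n < (\<Sum>i<n. indicator (W j) (T n i \<omega>))})"
      have finKs: "finite Ks"
      proof -
        have "Ks \<subseteq> {..nat \<lceil>Tm * real n powr (2/3)\<rceil>}"
          unfolding Ks_def by (auto simp: le_nat_iff le_ceiling_iff)
        thus ?thesis by (rule finite_subset) simp
      qed
      have E1s: "E1 \<in> sets M" unfolding E1_def
      proof (intro sets.finite_UN finKs ballI)
        fix k assume "k \<in> Ks"
        hence [measurable]: "S n k \<in> borel_measurable M" using mS by (simp add: Ks_def)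
        show "{\<omega>\<in>space M. c n < S n k \<omega>} \<in> sets M" by measurable
      qed
      have E2s: "E2 \<in> sets M" unfolding E2_def
      proof (intro sets.finite_UN ballI)
        fix i assume "i \<in> {..<n}"
        hence [measurable]: "T n i \<in> borel_measurable M" using mT by simp
        show "{\<omega>\<in>space M. T n i \<omega> < 0} \<in> sets M" by measurable
      qed simp
      have E3j: "{\<omega>\<in>space M. a n < (\<Sum>i<n. indicator (W j) (T n i \<omega>))} \<in> sets M" for j
      proof -
        have [measurable]: "(\<lambda>\<omega>. \<Sum>i<n. indicator (W j) (T n i \<omega>) :: real) \<in> borel_measurable M"
        proof (rule borel_measurable_sum)
          fix i assume "i \<in> {..<n}"
          hence [measurable]: "T n i \<in> borel_measurable M" using mT by simp
          show "(\<lambda>\<omega>. indicator (W j) (T n i \<omega>) :: real) \<in> borel_measurable M"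
            unfolding W_def by measurable
        qed
        show ?thesis by measurable
      qed
      have E3s: "E3 \<in> sets M" unfolding E3_def using E3j by (intro sets.countable_UN) auto
      have incl: "{\<omega> \<in> space M. \<epsilon> < \<bar>real n powr (-1/3) * real (maxA \<beta> Tm n (\<lambda>i. T n i \<omega>) (\<lambda>j. S n j \<omega>))\<bar>}
          \<subseteq> E1 \<union> E2 \<union> E3"
      proof
        fix \<omega> assume \<omega>: "\<omega> \<in> {\<omega> \<in> space M. \<epsilon> < \<bar>real n powr (-1/3) * real (maxA \<beta> Tm n (\<lambda>i. T n i \<omega>) (\<lambda>j. S n j \<omega>))\<bar>}"
        show "\<omega> \<in> E1 \<union> E2 \<union> E3"
        proof (rule ccontr)
          assume nE: "\<omega> \<notin> E1 \<union> E2 \<union> E3"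
          have sp: "\<omega> \<in> space M" using \<omega> by simp
          have tnn: "\<forall>i<n. 0 \<le> T n i \<omega>" using nE sp by (auto simp: E2_def not_less)
          have Dk: "\<forall>k. 1 \<le> k \<and> real k \<le> Tm * real n powr (2/3) \<longrightarrow> svc_D \<beta> n (\<lambda>j. S n j \<omega>) k \<le> h n"
          proof (intro allI impI)
            fix k assume "1 \<le> k \<and> real k \<le> Tm * real n powr (2/3)"
            hence "S n k \<omega> \<le> c n" using nE sp by (auto simp: E1_def Ks_def not_less)
            hence "S n k \<omega> / real n * cn n \<le> c n / real n * cn n"
              using elim n0 by (intro mult_right_mono divide_right_mono) auto
            also have "\<dots> = h n" using elim n0 by (simp add: c_def)
            finally show "svc_D \<beta> n (\<lambda>j. S n j \<omega>) k \<le> h n" by (simp add: svc_D_def cn_def)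
          qed
          have big: "a n < real (maxA \<beta> Tm n (\<lambda>i. T n i \<omega>) (\<lambda>j. S n j \<omega>))"
          proof -
            have "\<epsilon> < real n powr (-1/3) * real (maxA \<beta> Tm n (\<lambda>i. T n i \<omega>) (\<lambda>j. S n j \<omega>))"
              using \<omega> by simp
            hence "\<epsilon> * real n powr (1/3) < real n powr (-1/3) * real (maxA \<beta> Tm n (\<lambda>i. T n i \<omega>) (\<lambda>j. S n j \<omega>)) * real n powr (1/3)"
              using n0 by (intro mult_strict_right_mono) auto
            also have "\<dots> = real (maxA \<beta> Tm n (\<lambda>i. T n i \<omega>) (\<lambda>j. S n j \<omega>))"
              using n0 by (simp add: powr_add[symmetric])
            finally show ?thesis by (simp add: a_def)
          qed
          obtain j :: nat where "a n < (\<Sum>i<n. indicator {real j * h n..(real j + 2) * h n} (T n i \<omega>))"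
            using maxA_event[OF h0 less_imp_le[OF a0] tnn Dk big] by blast
          hence "\<omega> \<in> E3" using sp by (auto simp: E3_def W_def)
          thus False using nE by simp
        qed
      qed
      have "P n \<le> prob (E1 \<union> E2 \<union> E3)"
        unfolding P_def using incl E1s E2s E3s by (intro finite_measure_mono) auto
      also have "\<dots> \<le> prob E1 + prob E2 + prob E3"
        using E1s E2s E3s by (meson add_right_mono measure_Un_le order_trans sets.Un)
      also have "prob E1 \<le> b1 n"
      proof -
        have "prob E1 \<le> (\<Sum>k\<in>Ks. prob {\<omega>\<in>space M. c n < S n k \<omega>})"
          unfolding E1_def
        proof (rule measure_UNION_le[OF finKs])
          fix k assume "k \<in> Ks"
          hence [measurable]: "S n k \<in> borel_measurable M" using mS by (simp add: Ks_def)
          show "{\<omega>\<in>space M. c n < S n k \<omega>} \<in> sets M" by measurable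
        qed
        also have "\<dots> \<le> (\<Sum>k\<in>Ks. g n / (c n)^2)"
        proof (rule sum_mono)
          fix k assume "k \<in> Ks"
          hence k1: "1 \<le> k" by (simp add: Ks_def)
          show "prob {\<omega>\<in>space M. c n < S n k \<omega>} \<le> g n / (c n)^2"
            unfolding g_def by (rule tail_prob[OF \<open>prob_space M\<close> mS[OF k1] services[OF k1] Sd_sq c0])
        qed
        also have "\<dots> = real (card Ks) * (g n / (c n)^2)" by simp
        also have "\<dots> \<le> Tm * real n powr (2/3) * (g n / (c n)^2)"
        proof (rule mult_right_mono)
          show "real (card Ks) \<le> Tm * real n powr (2/3)"
            unfolding Ks_def using Tm by (intro card_Kset) simp
          have "0 \<le> g n" unfolding g_def by (rule integral_nonneg_AE) (auto simp: indicator_def)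
          thus "0 \<le> g n / (c n)^2" by simp
        qed
        finally show ?thesis by (simp add: b1_def powr_add mult_ac)
      qed
      also have "prob E2 \<le> 0"
      proof -
        have "prob E2 \<le> (\<Sum>i<n. prob {\<omega>\<in>space M. T n i \<omega> < 0})"
          unfolding E2_def
        proof (rule measure_UNION_le)
          fix i assume "i \<in> {..<n}"
          hence [measurable]: "T n i \<in> borel_measurable M" using mT by simp
          show "{\<omega>\<in>space M. T n i \<omega> < 0} \<in> sets M" by measurable
        qed simp
        also have "\<dots> \<le> (\<Sum>i<n. 0)"
        proof (rule sum_mono)
          fix i assume "i \<in> {..<n}"
          hence i: "i < n" by simp
          note [measurable] = mT[OF i]
          have "prob {\<omega>\<in>space M. T n i \<omega> < 0} \<le> prob {\<omega>\<in>space M. T n i \<omega> \<le> 0}"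
            by (intro finite_measure_mono) auto
          also have "\<dots> = 0" using exp_prob_le[OF clocks[OF i] lam, of 0] by (simp add: expF_def)
          finally show "prob {\<omega>\<in>space M. T n i \<omega> < 0} \<le> 0" .
        qed
        finally show ?thesis by simp
      qed
      also have "prob E3 \<le> b3 n"
      proof -
        have indI: "indep_vars (\<lambda>_. borel) (Xc n) (Inl ` {..<n})"
          by (rule indep_vars_subset[OF indep[of n, folded Xc_def]]) auto
        have cardI: "card (Inl ` {..<n} :: (nat + nat) set) = n"
          by (simp add: card_image)
        have E3eq: "E3 = (\<Union>j::nat. {\<omega>\<in>space M. a n < (\<Sum>i\<in>Inl ` {..<n}. indicator {real j * h n..(real j + 2) * h n} (Xc n i \<omega>))})"
          unfolding E3_def W_def by (simp add: sum.reindex Xc_def)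
        have "prob E3 \<le> 3 * (card (Inl ` {..<n} :: (nat + nat) set) * (exp 1 - 1) * exp (a n/2) / (exp (a n) - 1))"
          unfolding E3eq
        proof (rule E3_bound[OF lam h0 a0 _ indI])
          fix i assume "i \<in> (Inl ` {..<n} :: (nat + nat) set)"
          then obtain i' where "i = Inl i'" "i' < n" by auto
          thus "distributed M lborel (Xc n i) (exponential_density lam)"
            using clocks by (simp add: Xc_def)
        next
          show "real (card (Inl ` {..<n} :: (nat + nat) set)) * (exp 1 - 1) * (3 * lam * h n) \<le> a n / 2"
            unfolding cardI using n0 lam by (simp add: h_def K_def field_simps)
        qed simp
        thus ?thesis unfolding cardI b3_def .
      qed
      finally show ?case by simp
    qed
    have b1lim: "b1 \<longlonglongrightarrow> Tm * (K * lam / \<epsilon>)^2 * 0"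
      unfolding b1_def
    proof (intro tendsto_mult tendsto_const)
      show "(\<lambda>n. real n powr (2/3) / (c n)^2) \<longlonglongrightarrow> (K * lam / \<epsilon>)^2"
        unfolding c_def h_def a_def cn_def using \<epsilon> lam K0 by (real_asymp simp: field_simps power2_eq_square)
      have "filterlim c at_top sequentially"
        unfolding c_def h_def a_def cn_def using \<epsilon> lam K0 by real_asymp
      thus "g \<longlonglongrightarrow> 0" unfolding g_def by (rule tail_int_tendsto[OF sSd Sd_sq])
    qed
    have b3lim: "b3 \<longlonglongrightarrow> 0"
      unfolding b3_def a_def using \<epsilon> by real_asymp
    have "(\<lambda>n. b1 n + b3 n) \<longlonglongrightarrow> 0" using tendsto_add[OF b1lim b3lim] by simp
    hence "P \<longlonglongrightarrow> 0"
      by (intro tendsto_sandwich[OF _ ev tendsto_const[of 0]]) (auto simp: P_def)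
    thus "((\<lambda>n. prob {\<omega> \<in> space M. \<epsilon> < \<bar>real n powr (-1/3) * real (maxA \<beta> Tm n (\<lambda>i. T n i \<omega>) (\<lambda>j. S n j \<omega>))\<bar>}) \<longlongrightarrow> 0) sequentially"
      unfolding P_def[abs_def] .
  qed
qed


end
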